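(* Fix $n\geq1$ and for $1\leq r\leq n$ let $PE_r$ be the projectivization of the bundle $E_r=\mathrm{pr}_1^*\gamma\oplus\mathrm{pr}_2^*\gamma\oplus\mathbb{C}$ over $\mathbb{CP}^{r-1}\times\mathbb{CP}^{2n-r-1}$. Then $$\gcd\big(S_n(PE_r):1\leq r\leq n\big)=\begin{cases}1, & \text{if }2n+1\text{ is not a prime power},\\ p, & \text{if }2n+1\text{ is a power of a prime }p.\end{cases}$$
   Context: $\gamma$ denotes the canonical complex line bundle, $\mathbb{C}$ the trivial line bundle. For a closed oriented $4n$-manifold $M$, $S_n(M)=\langle s_n(TM),[M]\rangle$ with $s_n$ the polynomial expressing $\sum t_i^n$ in elementary symmetric functions evaluated on Pontryagin classes. One has $S_n(PE_r)=1+(-1)^{r+1}\binom{2n}{r}$. *)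

theory Defs
  imports "HOL-Computational_Algebra.Primes"
begin

text \<open>Characteristic number S_n(PE_r) of the projectivization PE_r of
  pr1*gamma + pr2*gamma + C over CP^(r-1) x CP^(2n-r-1), given by the
  formula S_n(PE_r) = 1 + (-1)^(r+1) * binom(2n, r) stated in the context.\<close>
definition S_PE :: "nat \<Rightarrow> nat \<Rightarrow> int" where
  "S_PE n r = 1 + (-1) ^ (r + 1) * int ((2 * n) choose r)"

end

theory Submission
  imports Defs
begin

lemma lemA:
  fixes q j N s :: nat
  assumes "prime q" "q^j dvd N" "0 < s" "s < q^j"
  shows "q dvd (N choose s)"
proof (cases N)
  case 0
  then show ?thesis using assms(3) by (cases s) auto
next
  case (Suc M)
  obtain t where st: "s = Suc t" using assms(3) by (cases s) auto
  have eq: "Suc M * (M choose t) = (Suc M choose Suc t) * Suc t"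
    by (rule Suc_times_binomial_eq)
  have "q^j dvd (N choose s) * s"
    using eq assms(2) Suc st by (metis dvd_mult2)
  show ?thesis
  proof (rule ccontr)
    assume "\<not> q dvd (N choose s)"
    then have "coprime q (N choose s)" using assms(1) prime_imp_coprime by blast
    then have "coprime (q^j) (N choose s)" by simp
    then have "q^j dvd s" using \<open>q^j dvd (N choose s) * s\<close>
      by (simp add: coprime_dvd_mult_right_iff)
    then show False using assms(3,4) by (simp add: nat_dvd_not_less)
  qed
qed

lemma lemB:
  fixes q j N s :: nat
  assumes "prime q" "q^j dvd N" "0 < N" "s < q^j"
  shows "int q dvd int ((N - 1) choose s) - (-1)^s"
  using assms(4)
proof (induction s)
  case 0
  then show ?case by simp
next
  case (Suc s)
  obtain M where M: "N = Suc M" using assms(3) by (cases N) auto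
  have h1: "int q dvd int (M choose s) - (-1)^s" using Suc M by simp
  have h2: "q dvd (N choose Suc s)" using lemA[OF assms(1,2)] Suc by simp
  have "N choose Suc s = (M choose s) + (M choose Suc s)" using M by simp
  then have "int (M choose Suc s) - (-1)^(Suc s)
      = int (N choose Suc s) - (int (M choose s) - (-1)^s)" by simp
  moreover have "int q dvd int (N choose Suc s)" using h2 by simp
  ultimately have "int q dvd int (M choose Suc s) - (-1)^(Suc s)"
    using h1 by (metis dvd_diff)
  then show ?case using M by simp
qed

lemma lemC:
  fixes q N :: nat
  assumes "prime q" "1 < N" "\<forall>r. 1 \<le> r \<and> r < N \<longrightarrow> q dvd (N choose r)"
  shows "\<exists>j. N = q^j"
proof -
  define j where "j = multiplicity q N"
  have dj: "q^j dvd N" unfolding j_def by (rule multiplicity_dvd)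
  have ndj: "\<not> q^(Suc j) dvd N"
    using j_def assms power_dvd_iff_le_multiplicity[where p=q and n="Suc j" and x=N] prime_gt_1_nat by auto
  define m where "m = N div q^j"
  have Nm: "N = q^j * m" using dj m_def by simp
  have nqm: "\<not> q dvd m"
  proof
    assume "q dvd m"
    then have "q^j * q dvd N" using Nm by simp
    then show False using ndj by (simp add: mult.commute)
  qed
  have qpos: "q^j > 0" using assms(1) prime_gt_0_nat by simp
  have le: "q^j \<le> N" using dj assms(2) by (simp add: dvd_imp_le)
  show ?thesis
  proof (rule ccontr)
    assume "\<nexists>j. N = q ^ j"
    then have lt: "q^j < N" using le by (metis le_neq_implies_less)
    obtain M where M: "N = Suc M" using assms(2) by (cases N) auto
    obtain t where t: "q^j = Suc t" using qpos by (cases "q^j") auto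
    have eq: "Suc M * (M choose t) = (Suc M choose Suc t) * Suc t"
      by (rule Suc_times_binomial_eq)
    have e2: "N * (M choose t) = (N choose q^j) * q^j" using eq M t by simp
    have "q^j * (m * (M choose t)) = N * (M choose t)" using Nm by (simp add: mult.assoc)
    then have "q^j * (m * (M choose t)) = q^j * (N choose q^j)" using e2 by (simp add: mult.commute)
    then have ceq: "N choose q^j = m * (M choose t)" using qpos by (metis mult_left_cancel neq0_conv)
    have "1 \<le> q^j" using qpos by linarith
    then have "q dvd (N choose q^j)" using assms(3) lt by blast
    then have "q dvd (M choose t)" using ceq nqm assms(1) prime_dvd_mult_iff by metis
    moreover have "int q dvd int (M choose t) - (-1)^t"
      using lemB[OF assms(1) dj, of t] M t by simp
    ultimately have "int q dvd (-1)^t"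
      by (metis dvd_diff_right_iff int_dvd_int_iff)
    then have "int q dvd 1" by (metis dvd_power_iff_le is_unit_power_iff minus_one_power_iff dvd_minus_iff)
    then show False using assms(1) by (metis int_dvd_int_iff of_nat_1 nat_dvd_1_iff_1 not_prime_1)
  qed
qed



lemma lemD:
  fixes d :: int and n :: nat
  assumes "\<forall>r\<in>{1..n}. d dvd S_PE n r"
  shows "\<forall>r. 1 \<le> r \<and> r \<le> 2*n \<longrightarrow> d dvd int ((2*n+1) choose r)"
proof -
  have E: "d dvd ((-1)^r * int ((2*n) choose r) - 1)" if rle: "r \<le> 2*n" for r
  proof -
    consider "r = 0" | "1 \<le> r \<and> r \<le> n" | "n < r \<and> r < 2*n" | "r = 2*n"
    proof -
      have "r = 0 \<or> (1 \<le> r \<and> r \<le> n) \<or> (n < r \<and> r < 2*n) \<or> r = 2*n" using rle by linarith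
      then show ?thesis using that by blast
    qed
    then show ?thesis
    proof cases
      case 1 then show ?thesis by simp
    next
      case 2
      then have "d dvd S_PE n r" using assms by auto
      moreover have "S_PE n r = - ((-1)^r * int ((2*n) choose r) - 1)"
        unfolding S_PE_def by simp
      ultimately show ?thesis by (metis dvd_minus_iff)
    next
      case 3
      define r' where "r' = 2*n - r"
      have r': "1 \<le> r' \<and> r' \<le> n" using 3 r'_def by auto
      have c: "(2*n) choose r = (2*n) choose r'" unfolding r'_def
        using 3 by (intro binomial_symmetric) simp
      have "r = r' + 2*(r - n)" using 3 r'_def by auto
      then have "(-1::int)^r = (-1)^r' * ((-1)^2)^(r-n)" by (metis power_add power_mult)
      then have s: "(-1::int)^r = (-1)^r'" by simp
      have "d dvd S_PE n r'" using assms r' by auto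
      moreover have "S_PE n r' = - ((-1)^r' * int ((2*n) choose r') - 1)"
        unfolding S_PE_def by simp
      ultimately show ?thesis using c s by (metis dvd_minus_iff)
    next
      case 4 then show ?thesis by simp
    qed
  qed
  show ?thesis
  proof (intro allI impI)
    fix r assume r: "1 \<le> r \<and> r \<le> 2*n"
    obtain t where t: "r = Suc t" using r by (cases r) auto
    have "(2*n+1) choose r = ((2*n) choose t) + ((2*n) choose Suc t)" using t by simp
    then have "(-1)^r * int ((2*n+1) choose r)
        = ((-1)^Suc t * int ((2*n) choose Suc t) - 1) - ((-1)^t * int ((2*n) choose t) - 1)"
      using t by (simp add: algebra_simps)
    moreover have "d dvd ((-1)^Suc t * int ((2*n) choose Suc t) - 1)" using E[of "Suc t"] r t by blast
    moreover have "d dvd ((-1)^t * int ((2*n) choose t) - 1)" using E r t by simp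
    ultimately have "d dvd (-1)^r * int ((2*n+1) choose r)" by (metis dvd_diff)
    then have "d dvd (-1)^r * ((-1)^r * int ((2*n+1) choose r))" by (rule dvd_mult)
    moreover have "(-1::int)^r * (-1)^r = 1" by (simp add: power_mult_distrib[symmetric])
    ultimately show "d dvd int ((2*n+1) choose r)" by (simp add: mult.assoc[symmetric])
  qed
qed


theorem lemma8p4:
  fixes n :: nat
  assumes "n \<ge> 1"
  shows "(\<not> (\<exists>p k. prime (p::nat) \<and> 2 * n + 1 = p ^ k) \<longrightarrow>
            Gcd (S_PE n ` {1..n}) = 1)
       \<and> (\<forall>(p::nat) k. prime p \<and> 2 * n + 1 = p ^ k \<longrightarrow>
            Gcd (S_PE n ` {1..n}) = int p)"
proof -
  define N where "N = 2*n+1"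
  define G where "G = Gcd (S_PE n ` {1..n})"
  have Gdvd: "\<forall>r\<in>{1..n}. G dvd S_PE n r" unfolding G_def by (simp add: Gcd_dvd)
  have Ggr: "x dvd G" if "\<forall>r\<in>{1..n}. x dvd S_PE n r" for x
    unfolding G_def using that by (intro Gcd_greatest) auto
  have "normalize G = G" unfolding G_def by (rule normalize_Gcd)
  then have Gnn: "G \<ge> 0" by simp
  have "S_PE n 1 = int N" unfolding S_PE_def N_def by simp
  then have GN: "G dvd int N" using Gdvd assms by (metis atLeastAtMost_iff order_refl)
  have N1: "N > 1" using assms N_def by simp
  have GC: "\<forall>r. 1 \<le> r \<and> r \<le> 2*n \<longrightarrow> G dvd int (N choose r)"
    using lemD[OF Gdvd] N_def by simp
  show ?thesis
  proof (intro conjI impI allI)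
    assume np: "\<not> (\<exists>p k. prime (p::nat) \<and> 2 * n + 1 = p ^ k)"
    show "Gcd (S_PE n ` {1..n}) = 1"
    proof (rule ccontr)
      assume "Gcd (S_PE n ` {1..n}) \<noteq> 1"
      then have "nat G \<noteq> 1" using Gnn G_def by simp
      then obtain q where q: "prime q" "q dvd nat G" using prime_factor_nat by blast
      then have "int q dvd int (nat G)" by (simp only: int_dvd_int_iff)
      then have qG: "int q dvd G" using Gnn by simp
      have "\<forall>r. 1 \<le> r \<and> r < N \<longrightarrow> q dvd (N choose r)"
      proof (intro allI impI)
        fix r assume "1 \<le> r \<and> r < N"
        then have "G dvd int (N choose r)" using GC N_def by simp
        then have "int q dvd int (N choose r)" using qG by (rule dvd_trans[rotated])
        then show "q dvd (N choose r)" by simp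
      qed
      then obtain j where "N = q^j" using lemC[OF q(1) N1] by blast
      then show False using np q(1) N_def by metis
    qed
  next
    fix p k :: nat
    assume pk: "prime p \<and> 2 * n + 1 = p ^ k"
    then have p: "prime p" and Npk: "N = p^k" using N_def by auto
    have p1: "p > 1" using p prime_gt_1_nat by blast
    have k1: "k \<ge> 1" using N1 Npk by (cases k) auto
    have "int p dvd S_PE n r" if r: "r \<in> {1..n}" for r
    proof -
      have "r < p^k" using r Npk N_def by simp
      then have h: "int p dvd int ((N - 1) choose r) - (-1)^r"
        using lemB[OF p, of k N r] Npk N1 p1 by simp
      have "S_PE n r = - ((-1)^r * (int ((N - 1) choose r) - (-1)^r))"
        unfolding S_PE_def N_def by (simp add: algebra_simps power_mult_distrib[symmetric])
      then show ?thesis using h by (metis dvd_minus_iff dvd_mult)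
    qed
    then have pG: "int p dvd G" using Ggr by blast
    have "int (nat G) dvd int (p^k)" using GN Npk Gnn by simp
    then have "nat G dvd p^k" by (simp only: int_dvd_int_iff)
    then obtain i where i: "i \<le> k" "nat G = p^i" using divides_primepow_nat[OF p] by blast
    have "i \<ge> 1"
    proof (rule ccontr)
      assume "\<not> i \<ge> 1"
      then have "nat G = 1" using i by simp
      then have "G = 1" using Gnn by simp
      then show False using pG p1 by simp
    qed
    moreover have "\<not> i \<ge> 2"
    proof
      assume i2: "i \<ge> 2"
      then have k2: "k \<ge> 2" using i by simp
      define r where "r = p^(k-1)"
      have rpos: "r > 0" using p1 r_def by simp
      have rN: "r < N" using Npk r_def p1 k2 by simp
      have "p^2 dvd nat G" using i i2 by (simp add: le_imp_power_dvd)
      then have "int (p^2) dvd int (nat G)" by (simp only: int_dvd_int_iff)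
      then have "int (p^2) dvd G" using Gnn by simp
      moreover have "G dvd int (N choose r)" using GC rpos rN N_def by simp
      ultimately have "int (p^2) dvd int (N choose r)" by (rule dvd_trans)
      then have d2: "p^2 dvd (N choose r)" by (simp only: int_dvd_int_iff)
      obtain M where M: "N = Suc M" using N1 by (cases N) auto
      obtain t where t: "r = Suc t" using rpos by (cases r) auto
      have "Suc M * (M choose t) = (Suc M choose Suc t) * Suc t" by (rule Suc_times_binomial_eq)
      then have "N * (M choose t) = (N choose r) * r" using M t by simp
      moreover have "N = p * r" using Npk r_def k2 by (cases k) auto
      ultimately have "r * (p * (M choose t)) = r * (N choose r)" by (simp add: ac_simps)
      then have ce: "N choose r = p * (M choose t)" using rpos by simp
      then have "p * p dvd p * (M choose t)" using d2 by (simp add: power2_eq_square)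
      then have "p dvd (M choose t)" using p1 by simp
      moreover have "t < p^k" using t rN Npk by simp
      then have "int p dvd int (M choose t) - (-1)^t" using lemB[OF p, of k N t] Npk M p1 by (metis diff_Suc_1 dvd_refl zero_less_Suc)
      ultimately have "int p dvd (-1)^t" by (metis dvd_diff_right_iff int_dvd_int_iff)
      then have "int p dvd 1" by (metis dvd_power_iff_le is_unit_power_iff minus_one_power_iff dvd_minus_iff)
      then show False using p by (metis int_dvd_int_iff of_nat_1 nat_dvd_1_iff_1 not_prime_1)
    qed
    ultimately have "i = 1" by simp
    then have "nat G = p" using i by simp
    then have "G = int p" using Gnn by auto
    then show "Gcd (S_PE n ` {1..n}) = int p" using G_def by simp
  qed
qed

end
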